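(* Let $\Xi$ be a nonzero finite measure on $\Delta$ and let $\gamma$ be as in the context. Then $\gamma(0)=\gamma(1)=0$, $\gamma(x)>0$ for all $x>1$, and $\gamma(x)\le x(x-1)(a/2+\Xi_0(\Delta))$ for all $x\ge 2$. Moreover $\gamma\in C^\infty((0,\infty))$ with $$\gamma'(x)=a\Big(x-\tfrac12\Big)+\int_\Delta\sum_{i\ge1}\big((1-u_i)^x\log(1-u_i)+u_i\big)\,\nu(\mathrm du),\qquad x>0,$$ and, for every integer $k\ge 2$, $$\gamma^{(k)}(x)=a\,\delta_{k2}+\int_\Delta\sum_{i\ge1}(1-u_i)^x\big(\log(1-u_i)\big)^k\,\nu(\mathrm du),\qquad x>0,$$ where $\delta_{k2}$ is the Kronecker delta. Finally, the map $x\mapsto\gamma(x)/x$ is strictly increasing on $[1,\infty)$; in particular $\gamma$ is strictly increasing on $[1,\infty)$.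
   Context: Let $\Delta:=\{u=(u_1,u_2,\ldots):u_1\ge u_2\ge\cdots\ge0,\ \sum_{i\ge1}u_i\le1\}$, and for $u\in\Delta$ write $|u|:=\sum_{i\ge1}u_i$, $(u,u):=\sum_{i\ge1}u_i^2$, and $0:=(0,0,\ldots)$. Let $\Xi$ be a finite measure on $\Delta$, $a:=\Xi(\{0\})$, $\Xi_0:=\Xi-a\delta_0$ (so $\Xi=a\delta_0+\Xi_0$), and $\nu(\mathrm du):=\Xi_0(\mathrm du)/(u,u)$ on $\Delta\setminus\{0\}$. Define $\gamma:[0,\infty)\to\mathbb R$ by $$\gamma(x):=a\frac{x(x-1)}{2}+\int_\Delta\sum_{i\ge1}\big((1-u_i)^x-1+xu_i\big)\,\nu(\mathrm du),\qquad x\ge0.$$ *)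

theory Defs
  imports "HOL-Analysis.Analysis"
begin

text \<open>The simplex Delta of non-increasing non-negative sequences with sum at most 1.
  Sequences are functions nat to real; indices start at 0 (u 0 plays the role of u_1).
  The measurable structure is the Borel sigma-algebra of the product topology,
  restricted to Delta.\<close>

definition Delta :: "(nat \<Rightarrow> real) set" where
  "Delta = {u. (\<forall>i. u (Suc i) \<le> u i) \<and> (\<forall>i. 0 \<le> u i) \<and> summable u \<and> suminf u \<le> 1}"

definition sqsum :: "(nat \<Rightarrow> real) \<Rightarrow> real" where
  "sqsum u = (\<Sum>i. (u i)^2)"

text \<open>Real power with the convention b^0 = 1 (also for b = 0), b^x = b powr x otherwise.\<close>
definition rpow :: "real \<Rightarrow> real \<Rightarrow> real" where
  "rpow b x = (if x = 0 then 1 else b powr x)"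

definition xi_a :: "(nat \<Rightarrow> real) measure \<Rightarrow> real" where
  "xi_a Xi = measure Xi {\<lambda>_. 0}"

text \<open>Integral against nu(du) = Xi_0(du)/(u,u) on Delta minus {0}.\<close>
definition nu_integral :: "(nat \<Rightarrow> real) measure \<Rightarrow> ((nat \<Rightarrow> real) \<Rightarrow> real) \<Rightarrow> real" where
  "nu_integral Xi f = set_lebesgue_integral Xi (Delta - {\<lambda>_. 0}) (\<lambda>u. f u / sqsum u)"

definition xi_gamma :: "(nat \<Rightarrow> real) measure \<Rightarrow> real \<Rightarrow> real" where
  "xi_gamma Xi x = xi_a Xi * (x * (x - 1) / 2)
     + nu_integral Xi (\<lambda>u. \<Sum>i. (rpow (1 - u i) x - 1 + x * u i))"

end

theory Submission imports Defs begin

lemma lip_bound: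
  fixes f f' :: "real \<Rightarrow> real"
  assumes der: "\<And>t. c < t \<Longrightarrow> t < d \<Longrightarrow> (f has_real_derivative f' t) (at t)"
    and bnd: "\<And>t. c < t \<Longrightarrow> t < d \<Longrightarrow> \<bar>f' t\<bar> \<le> B"
    and st: "c < s" "s < d" "c < t" "t < d"
  shows "\<bar>f t - f s\<bar> \<le> \<bar>t - s\<bar> * B"
proof (cases "t = s")
  case True then show ?thesis by simp
next
  case False
  define a b where "a = min t s" and "b = max t s"
  have ab: "a < b" "c < a" "b < d" using False st by (auto simp: a_def b_def)
  obtain z where z: "a < z" "z < b" "f b - f a = (b - a) * f' z"
    using MVT2[OF ab(1), of f f'] der ab by force
  have fz: "\<bar>f' z\<bar> \<le> B" using bnd[of z] z ab by auto
  have "\<bar>f t - f s\<bar> = \<bar>f b - f a\<bar>" unfolding a_def b_def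
    by (cases "t \<le> s") (auto simp: min_def max_def abs_minus_commute)
  also have "\<dots> = (b - a) * \<bar>f' z\<bar>" using z(3) ab by (simp add: abs_mult)
  also have "b - a = \<bar>t - s\<bar>" unfolding a_def b_def by auto
  finally show ?thesis using fz by (simp add: mult_left_mono)
qed

lemma dui_integrable:
  fixes f f' :: "real \<Rightarrow> 'a \<Rightarrow> real" and g :: "'a \<Rightarrow> real"
  assumes pp: "c < pp" "pp < d" "integrable M (f pp)"
    and meas: "\<And>t. c < t \<Longrightarrow> t < d \<Longrightarrow> f t \<in> borel_measurable M"
    and der: "\<And>t u. c < t \<Longrightarrow> t < d \<Longrightarrow> u \<in> space M \<Longrightarrow> ((\<lambda>s. f s u) has_real_derivative f' t u) (at t)"
    and bnd: "\<And>t u. c < t \<Longrightarrow> t < d \<Longrightarrow> u \<in> space M \<Longrightarrow> \<bar>f' t u\<bar> \<le> g u"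
    and gi: "integrable M g"
    and t: "c < t" "t < d"
  shows "integrable M (f t)"
proof (rule Bochner_Integration.integrable_bound[where f="\<lambda>u. \<bar>f pp u\<bar> + \<bar>t - pp\<bar> * g u"])
  show "integrable M (\<lambda>u. \<bar>f pp u\<bar> + \<bar>t - pp\<bar> * g u)"
    using pp gi by auto
  show "f t \<in> borel_measurable M" using meas t by auto
  have "norm (f t u) \<le> norm (\<bar>f pp u\<bar> + \<bar>t - pp\<bar> * g u)" if u: "u \<in> space M" for u
  proof -
    have g0: "0 \<le> g u" using bnd[OF pp(1,2) u] by linarith
    have "\<bar>f t u - f pp u\<bar> \<le> \<bar>t - pp\<bar> * g u"
      by (rule lip_bound[where f="\<lambda>s. f s u" and f'="\<lambda>s. f' s u" and c=c and d=d])
         (use der[OF _ _ u] bnd[OF _ _ u] pp t in auto)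
    then show ?thesis using g0 by auto
  qed
  then show "AE u in M. norm (f t u) \<le> norm (\<bar>f pp u\<bar> + \<bar>t - pp\<bar> * g u)" by auto
qed

lemma dui_deriv:
  fixes f f' :: "real \<Rightarrow> 'a \<Rightarrow> real" and g :: "'a \<Rightarrow> real"
  assumes pp: "c < pp" "pp < d" "integrable M (f pp)"
    and meas: "\<And>t. c < t \<Longrightarrow> t < d \<Longrightarrow> f t \<in> borel_measurable M"
    and meas': "\<And>t. c < t \<Longrightarrow> t < d \<Longrightarrow> f' t \<in> borel_measurable M"
    and der: "\<And>t u. c < t \<Longrightarrow> t < d \<Longrightarrow> u \<in> space M \<Longrightarrow> ((\<lambda>s. f s u) has_real_derivative f' t u) (at t)"
    and bnd: "\<And>t u. c < t \<Longrightarrow> t < d \<Longrightarrow> u \<in> space M \<Longrightarrow> \<bar>f' t u\<bar> \<le> g u"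
    and gi: "integrable M g"
    and x: "c < x" "x < d"
  shows "((\<lambda>t. \<integral>u. f t u \<partial>M) has_real_derivative (\<integral>u. f' x u \<partial>M)) (at x)"
proof -
  have intf: "integrable M (f t)" if "c < t" "t < d" for t
    by (rule dui_integrable[OF pp meas der bnd gi that])
  have q: "\<bar>(f y u - f x u) / (y - x)\<bar> \<le> g u" if "c < y" "y < d" "y \<noteq> x" "u \<in> space M" for y u
  proof -
    have "\<bar>f y u - f x u\<bar> \<le> \<bar>y - x\<bar> * g u"
      by (rule lip_bound[where f="\<lambda>s. f s u" and f'="\<lambda>s. f' s u" and c=c and d=d])
         (use der[OF _ _ that(4)] bnd[OF _ _ that(4)] x that in auto)
    then show ?thesis using that by (simp add: abs_divide divide_le_eq mult.commute)
  qed
  show ?thesis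
    unfolding has_field_derivative_iff
  proof (subst tendsto_at_iff_sequentially, intro allI impI)
    fix X :: "nat \<Rightarrow> real"
    assume X: "\<forall>i. X i \<in> UNIV - {x}" "X \<longlonglongrightarrow> x"
    have ev: "eventually (\<lambda>n. c < X n \<and> X n < d) sequentially"
      using order_tendstoD[OF X(2), of c] order_tendstoD[OF X(2), of d] x
      by (auto elim: eventually_elim2)
    define s where "s n u = (if c < X n \<and> X n < d then (f (X n) u - f x u) / (X n - x) else f' x u)" for n u
    have lim: "(\<lambda>n. integral\<^sup>L M (s n)) \<longlonglongrightarrow> integral\<^sup>L M (f' x)"
    proof (rule integral_dominated_convergence[where w=g])
      show "f' x \<in> borel_measurable M" using meas' x by auto
      show "s n \<in> borel_measurable M" for n
        unfolding s_def using meas meas' x by (cases "c < X n \<and> X n < d") auto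
      show "integrable M g" by fact
      show "AE u in M. norm (s n u) \<le> g u" for n
      proof (rule AE_I2)
        fix u assume u: "u \<in> space M"
        show "norm (s n u) \<le> g u"
          using q[OF _ _ _ u, of "X n"] bnd[OF x u] X(1) unfolding s_def by auto
      qed
      show "AE u in M. (\<lambda>n. s n u) \<longlonglongrightarrow> f' x u"
      proof (rule AE_I2)
        fix u assume u: "u \<in> space M"
        have "((\<lambda>y. (f y u - f x u) / (y - x)) \<longlongrightarrow> f' x u) (at x)"
          using der[OF x u] unfolding has_field_derivative_iff .
        then have "(\<lambda>n. (f (X n) u - f x u) / (X n - x)) \<longlonglongrightarrow> f' x u"
          using X unfolding tendsto_at_iff_sequentially o_def by blast
        then show "(\<lambda>n. s n u) \<longlonglongrightarrow> f' x u"
          by (rule Lim_transform_eventually) (use ev in \<open>auto simp: s_def elim: eventually_mono\<close>)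
      qed
    qed
    show "((\<lambda>t. ((\<integral>u. f t u \<partial>M) - (\<integral>u. f x u \<partial>M)) / (t - x)) \<circ> X) \<longlonglongrightarrow> integral\<^sup>L M (f' x)"
      using lim
    proof (rule Lim_transform_eventually)
      show "\<forall>\<^sub>F n in sequentially. integral\<^sup>L M (s n) = ((\<lambda>t. ((\<integral>u. f t u \<partial>M) - (\<integral>u. f x u \<partial>M)) / (t - x)) \<circ> X) n"
        using ev
      proof (rule eventually_mono)
        fix n assume n: "c < X n \<and> X n < d"
        have "integral\<^sup>L M (s n) = (\<integral>u. (f (X n) u - f x u) / (X n - x) \<partial>M)"
          unfolding s_def using n by simp
        also have "\<dots> = (\<integral>u. (f (X n) u - f x u) \<partial>M) / (X n - x)"
          by (rule integral_divide_zero)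
        also have "\<dots> = ((\<integral>u. f (X n) u \<partial>M) - (\<integral>u. f x u \<partial>M)) / (X n - x)"
          using intf[of "X n"] intf[OF x] n by simp
        finally show "integral\<^sup>L M (s n) = ((\<lambda>t. ((\<integral>u. f t u \<partial>M) - (\<integral>u. f x u \<partial>M)) / (t - x)) \<circ> X) n"
          by simp
      qed
    qed
  qed
qed


definition phi :: "nat \<Rightarrow> real \<Rightarrow> real \<Rightarrow> real" where
  "phi k t x = (if k = 0 then (1 - t) powr x - 1 + x * t
     else if k = 1 then (1 - t) powr x * ln (1 - t) + t
     else (1 - t) powr x * ln (1 - t) ^ k)"

lemma const_powr_deriv:
  assumes "0 < a"
  shows "((\<lambda>x. a powr x) has_real_derivative a powr x * ln a) (at x)"
  using has_real_derivative_const_powr[of "\<lambda>x. x" "\<lambda>_. 1" a x] by (simp add: mult.commute)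

lemma phi_deriv:
  assumes "t \<le> 1"
  shows "((\<lambda>x. phi k t x) has_real_derivative phi (Suc k) t x) (at x)"
proof (cases "t = 1")
  case True
  have e: "(\<lambda>x. phi k t x) = (\<lambda>x. if k = 0 then x - 1 else if k = 1 then 1 else 0)"
    using True by (auto simp: phi_def fun_eq_iff)
  have e2: "phi (Suc k) t x = (if k = 0 then 1 else 0)" using True by (auto simp: phi_def)
  show ?thesis unfolding e e2
    by (cases "k = 0"; cases "k = 1") (auto intro!: derivative_eq_intros)
next
  case False
  then have a: "0 < 1 - t" using assms by auto
  note D = const_powr_deriv[OF a]
  show ?thesis
  proof (cases "k = 0")
    case True
    have "((\<lambda>x. (1 - t) powr x - 1 + x * t) has_real_derivative (1 - t) powr x * ln (1 - t) - 0 + 1 * t) (at x)"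
      by (intro derivative_intros D) (use DERIV_cmult_right[OF DERIV_ident, of t x] in simp)
    then show ?thesis using True by (simp add: phi_def)
  next
    case k: False
    have "((\<lambda>x. (1 - t) powr x * ln (1 - t) ^ k) has_real_derivative (1 - t) powr x * ln (1 - t) * ln (1 - t) ^ k) (at x)"
      by (rule DERIV_cmult_right[OF D])
    moreover have "((\<lambda>x. (1 - t) powr x * ln (1 - t) + t) has_real_derivative (1 - t) powr x * ln (1 - t) * ln (1 - t) + 0) (at x)"
      by (rule DERIV_add[OF DERIV_cmult_right[OF D] DERIV_const])
    ultimately show ?thesis using k
      by (cases "k = 1") (auto simp: phi_def power2_eq_square mult.assoc)
  qed
qed


lemma slog_bound:
  fixes s c x :: real and k :: nat
  assumes s: "0 < s" "s \<le> 1" and c: "0 < c" "c \<le> x" and k: "0 < k"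
  shows "s powr x * \<bar>ln s\<bar> ^ k \<le> (k / c) ^ k"
proof -
  define y where "y = - ln s"
  have y0: "0 \<le> y" using s by (simp add: y_def)
  have ly: "\<bar>ln s\<bar> = y" using y0 by (simp add: y_def)
  have p: "s powr x = exp (- (x * y))" using s by (simp add: powr_def y_def)
  have e1: "exp (- (x * y)) \<le> exp (- (c * y))" using c y0 by (simp add: mult_right_mono)
  have "(1 + c * y / real k) ^ k \<le> exp (c * y)"
    proof (rule exp_ge_one_plus_x_over_n_power_n)
    have "0 \<le> c * y" using c y0 by simp
    then show "- real k \<le> c * y" by linarith
  qed (use k in auto)
  moreover have "(c * y / real k) ^ k \<le> (1 + c * y / real k) ^ k"
    by (rule power_mono) (use c y0 in auto)
  ultimately have "(c * y / real k) ^ k \<le> exp (c * y)" by linarith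
  then have "(c / real k) ^ k * y ^ k \<le> exp (c * y)"
    by (simp add: power_mult_distrib power_divide field_simps)
  then have "(k / c) ^ k * ((c / real k) ^ k * y ^ k) \<le> (k / c) ^ k * exp (c * y)"
    by (rule mult_left_mono) (use c in auto)
  moreover have "(k / c) ^ k * (c / real k) ^ k = 1"
    using c k by (simp add: power_mult_distrib[symmetric])
  ultimately have yk: "y ^ k \<le> (k / c) ^ k * exp (c * y)"
    by (simp add: mult.assoc[symmetric])
  have "s powr x * \<bar>ln s\<bar> ^ k \<le> exp (- (c * y)) * y ^ k"
    unfolding p ly by (rule mult_right_mono[OF e1]) (use y0 in auto)
  also have "\<dots> \<le> exp (- (c * y)) * ((k / c) ^ k * exp (c * y))"
    by (rule mult_left_mono[OF yk]) simp
  also have "\<dots> = (k / c) ^ k" by (simp add: exp_minus field_simps)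
  finally show ?thesis .
qed

lemma ln_small:
  fixes t :: real
  assumes "0 \<le> t" "t \<le> 1/2"
  shows "- (2 * t) \<le> ln (1 - t)" "ln (1 - t) \<le> - t" "\<bar>ln (1 - t)\<bar> \<le> 2 * t"
proof -
  have a: "- t - 2 * t\<^sup>2 \<le> ln (1 - t)" by (rule ln_one_minus_pos_lower_bound) (use assms in auto)
  have "2 * t\<^sup>2 \<le> t" using assms by (simp add: power2_eq_square) (use mult_right_mono[of t "1/2" t] in auto)
  with a show b: "- (2 * t) \<le> ln (1 - t)" by linarith
  show c: "ln (1 - t) \<le> - t" using ln_le_minus_one[of "1 - t"] assms by auto
  show "\<bar>ln (1 - t)\<bar> \<le> 2 * t" using b c assms by auto
qed

lemma phi_bound_ge2:
  assumes k: "2 \<le> k" and c: "0 < c"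
  shows "\<exists>B. \<forall>t\<in>{0..1}. \<forall>x. c \<le> x \<longrightarrow> \<bar>phi k t x\<bar> \<le> B * t\<^sup>2"
proof (intro exI ballI allI impI)
  fix t x :: real assume t: "t \<in> {0..1}" and x: "c \<le> x"
  have pk: "phi k t x = (1 - t) powr x * ln (1 - t) ^ k" using k by (simp add: phi_def)
  have B0: "0 \<le> (k / c) ^ k" using c by simp
  show "\<bar>phi k t x\<bar> \<le> (4 + 4 * (k / c) ^ k) * t\<^sup>2"
  proof (cases "t \<le> 1/2")
    case True
    have P: "(1 - t) powr x \<le> 1" "0 \<le> (1 - t) powr x"
      using t True c x by (auto intro: powr_le1)
    have L: "\<bar>ln (1 - t)\<bar> ^ k \<le> (2 * t) ^ k"
      by (rule power_mono) (use ln_small[of t] t True in auto)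
    have "(2 * t) ^ k \<le> (2 * t) ^ 2"
      by (rule power_decreasing) (use k t True in auto)
    have "\<bar>phi k t x\<bar> = (1 - t) powr x * \<bar>ln (1 - t)\<bar> ^ k"
      unfolding pk using P by (simp add: abs_mult power_abs)
    also have "\<dots> \<le> 1 * (2 * t) ^ k"
      by (rule mult_mono) (use P L in auto)
    also have "\<dots> \<le> (2 * t) ^ 2" using \<open>(2 * t) ^ k \<le> (2 * t) ^ 2\<close> by simp
    also have "\<dots> \<le> (4 + 4 * (k / c) ^ k) * t\<^sup>2"
      using B0 by (simp add: power_mult_distrib mult_right_mono)
    finally show ?thesis .
  next
    case False
    show ?thesis
    proof (cases "t = 1")
      case True then show ?thesis using pk B0 by simp
    next
      case t1: False
      have P: "0 \<le> (1 - t) powr x" by simp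
      have "\<bar>phi k t x\<bar> = (1 - t) powr x * \<bar>ln (1 - t)\<bar> ^ k"
        unfolding pk using P by (simp add: abs_mult power_abs)
      also have "\<dots> \<le> (k / c) ^ k"
        by (rule slog_bound) (use t t1 c x k in auto)
      also have "\<dots> \<le> 4 * (k / c) ^ k * t\<^sup>2"
      proof -
        have "1 \<le> 4 * t\<^sup>2" using False t
          by (simp add: power2_eq_square) (use mult_mono[of "1/2" t "1/2" t] in auto)
        then show ?thesis using B0 mult_left_mono[of 1 "4 * t\<^sup>2" "(k/c)^k"] by (simp add: mult_ac)
      qed
      also have "\<dots> \<le> (4 + 4 * (k / c) ^ k) * t\<^sup>2" by (simp add: algebra_simps)
      finally show ?thesis .
    qed
  qed
qed


lemma phi_bound_1:
  assumes c: "0 < c"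
  shows "\<exists>B. \<forall>t\<in>{0..1}. \<forall>x\<in>{c..d}. \<bar>phi 1 t x\<bar> \<le> B * t\<^sup>2"
proof (intro exI ballI)
  fix t x :: real assume t: "t \<in> {0..1}" and x: "x \<in> {c..d}"
  have p1: "phi 1 t x = (1 - t) powr x * ln (1 - t) + t" by (simp add: phi_def)
  have pp: "0 \<le> x" "x \<le> \<bar>d\<bar>" using x c by auto
  define B where "B = 2 * \<bar>d\<bar> + 2 + 4 * (1 / c + 1)"
  have B0: "0 \<le> 1 / c" using c by simp
  show "\<bar>phi 1 t x\<bar> \<le> B * t\<^sup>2"
  proof (cases "t \<le> 1/2")
    case True
    define L where "L = ln (1 - t)"
    define P where "P = (1 - t) powr x"
    have L: "- (2 * t) \<le> L" "L \<le> - t" using ln_small[of t] t True by (auto simp: L_def)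
    have P: "P \<le> 1" "0 \<le> P" using t True c x by (auto intro: powr_le1 simp: P_def)
    have Pe: "P = exp (x * L)" using t True by (simp add: P_def L_def powr_def)
    have P1: "1 + x * L \<le> P" unfolding Pe by (rule exp_ge_add_one_self)
    have up: "P * L + t \<le> 2 * \<bar>d\<bar> * t\<^sup>2"
    proof -
      have "P * L \<le> P * (- t)" using mult_left_mono[of L "-t" P] L P by simp
      then have "P * L + t \<le> t * (1 - P)" by (simp add: algebra_simps)
      also have "\<dots> \<le> t * (- (x * L))" using P1 t by (intro mult_left_mono) auto
      also have "- (x * L) \<le> x * (2 * t)" using L pp mult_left_mono[of "-L" "2*t" x] by simp
      then have "t * (- (x * L)) \<le> t * (x * (2 * t))" using t by (intro mult_left_mono) auto
      also have "t * (x * (2 * t)) \<le> t * (\<bar>d\<bar> * (2 * t))"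
        using t pp by (intro mult_left_mono mult_right_mono) auto
      finally show ?thesis by (simp add: power2_eq_square mult_ac)
    qed
    have lo: "- (2 * t\<^sup>2) \<le> P * L + t"
    proof -
      have "L \<le> P * L" using L P t mult_right_mono_neg[of P 1 L] by simp
      moreover have "- (2 * t) \<le> L" by (rule L)
      moreover have "- (2 * t\<^sup>2) \<le> L + t"
        using ln_small(1)[of t] ln_one_minus_pos_lower_bound[of t] t True by (simp add: L_def)
      ultimately show ?thesis by linarith
    qed
    have "\<bar>phi 1 t x\<bar> \<le> (2 * \<bar>d\<bar> + 2) * t\<^sup>2"
    proof -
      have h: "0 \<le> 2 * \<bar>d\<bar> * t\<^sup>2" "0 \<le> t\<^sup>2" by simp_all
      have e: "(2 * \<bar>d\<bar> + 2) * t\<^sup>2 = 2 * \<bar>d\<bar> * t\<^sup>2 + 2 * t\<^sup>2" by (simp add: algebra_simps)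
      have "\<bar>P * L + t\<bar> \<le> (2 * \<bar>d\<bar> + 2) * t\<^sup>2"
        unfolding e by (rule abs_leI) (use up lo h in linarith)+
      then show ?thesis unfolding p1 P_def L_def .
    qed
    also have "\<dots> \<le> B * t\<^sup>2" using B0 by (simp add: B_def mult_right_mono)
    finally show ?thesis .
  next
    case False
    have t4: "1 \<le> 4 * t\<^sup>2" using False t
      by (simp add: power2_eq_square) (use mult_mono[of "1/2" t "1/2" t] in auto)
    show ?thesis
    proof (cases "t = 1")
      case True
      then have "\<bar>phi 1 t x\<bar> = 1" by (simp add: phi_def)
      also have "1 \<le> B * t\<^sup>2" using True B0 by (simp add: B_def)
      finally show ?thesis .
    next
      case t1: False
      have "\<bar>phi 1 t x\<bar> \<le> (1 - t) powr x * \<bar>ln (1 - t)\<bar> ^ 1 + 1"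
      proof -
        have "\<bar>(1 - t) powr x * ln (1 - t) + t\<bar> \<le> \<bar>(1 - t) powr x * ln (1 - t)\<bar> + \<bar>t\<bar>" by (rule abs_triangle_ineq)
        also have "\<bar>(1 - t) powr x * ln (1 - t)\<bar> = (1 - t) powr x * \<bar>ln (1 - t)\<bar>" by (simp add: abs_mult)
        finally show ?thesis unfolding p1 using t by simp
      qed
      also have "(1 - t) powr x * \<bar>ln (1 - t)\<bar> ^ 1 \<le> (real 1 / c) ^ 1"
        by (rule slog_bound) (use t t1 c x in auto)
      finally have "\<bar>phi 1 t x\<bar> \<le> 1 / c + 1" by simp
      also have "\<dots> \<le> 4 * (1 / c + 1) * t\<^sup>2"
        using t4 B0 mult_left_mono[of 1 "4 * t\<^sup>2" "1/c + 1"] by (simp only: mult_ac) simp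
      also have "\<dots> \<le> B * t\<^sup>2" by (simp add: B_def algebra_simps)
      finally show ?thesis .
    qed
  qed
qed

lemma phi_bound:
  assumes k: "1 \<le> k" and c: "0 < c"
  shows "\<exists>B. \<forall>t\<in>{0..1}. \<forall>x\<in>{c..d}. \<bar>phi k t x\<bar> \<le> B * t\<^sup>2"
proof (cases "k = 1")
  case True then show ?thesis using phi_bound_1[OF c] by simp
next
  case False
  then obtain B where "\<forall>t\<in>{0..1}. \<forall>x. c \<le> x \<longrightarrow> \<bar>phi k t x\<bar> \<le> B * t\<^sup>2"
    using phi_bound_ge2[OF _ c, of k] k by auto
  then have "\<forall>t\<in>{0..1}. \<forall>x\<in>{c..d}. \<bar>phi k t x\<bar> \<le> B * t\<^sup>2" by auto
  then show ?thesis by blast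
qed


lemma Delta_D:
  assumes "u \<in> Delta"
  shows "0 \<le> u i" "u i \<le> 1" "summable u" "summable (\<lambda>i. (u i)\<^sup>2)"
proof -
  have u: "\<forall>i. 0 \<le> u i" "summable u" "suminf u \<le> 1" using assms by (auto simp: Delta_def)
  show "0 \<le> u i" "summable u" using u by auto
  have "sum u {i} \<le> suminf u" by (rule sum_le_suminf) (use u in auto)
  then show u1: "u i \<le> 1" using u by simp
  show "summable (\<lambda>i. (u i)\<^sup>2)"
  proof (rule summable_comparison_test'[OF u(2)])
    fix n
    have "0 \<le> u n" "u n \<le> 1" using u sum_le_suminf[of u "{n}"] by auto
    then show "norm ((u n)\<^sup>2) \<le> u n" by (simp add: power2_eq_square mult_le_cancel_right1 mult_left_le)
  qed
qed

lemma phi_at1: "t \<le> 1 \<Longrightarrow> phi 0 t 1 = 0"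
  by (simp add: phi_def)

lemma series_bound:
  assumes u: "u \<in> Delta" and B: "\<forall>t\<in>{0..1}. \<forall>x\<in>{c..d}. \<bar>phi k t x\<bar> \<le> B * t\<^sup>2"
    and x: "x \<in> {c..d}"
  shows "summable (\<lambda>i. phi k (u i) x)" "\<bar>\<Sum>i. phi k (u i) x\<bar> \<le> B * sqsum u"
proof -
  have b: "\<bar>phi k (u i) x\<bar> \<le> B * (u i)\<^sup>2" for i using B Delta_D(1)[OF u, of i] Delta_D(2)[OF u, of i] x by auto
  have s2: "summable (\<lambda>i. B * (u i)\<^sup>2)" using Delta_D(4)[OF u] by (rule summable_mult)
  have bl: "- (B * (u i)\<^sup>2) \<le> phi k (u i) x" for i using b[of i] by linarith
  show s: "summable (\<lambda>i. phi k (u i) x)"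
    by (rule summable_comparison_test'[OF s2]) (use b in auto)
  have "(\<Sum>i. phi k (u i) x) \<le> (\<Sum>i. B * (u i)\<^sup>2)"
    by (rule suminf_le) (use b s s2 in \<open>auto simp: abs_le_iff\<close>)
  moreover have "(\<Sum>i. - (B * (u i)\<^sup>2)) \<le> (\<Sum>i. phi k (u i) x)"
    by (rule suminf_le) (use bl s summable_minus[OF s2] in auto)
  moreover have "(\<Sum>i. B * (u i)\<^sup>2) = B * sqsum u"
    unfolding sqsum_def by (rule suminf_mult[OF Delta_D(4)[OF u]])
  moreover have "(\<Sum>i. - (B * (u i)\<^sup>2)) = - (B * sqsum u)"
    using suminf_minus[OF s2] \<open>(\<Sum>i. B * (u i)\<^sup>2) = B * sqsum u\<close> by simp
  ultimately show "\<bar>\<Sum>i. phi k (u i) x\<bar> \<le> B * sqsum u" by auto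
qed

lemma series_deriv_cd:
  assumes u: "u \<in> Delta" and c: "0 < c" "c < 1" "1 < d" and x: "c < x" "x < d"
  shows "summable (\<lambda>i. phi k (u i) x)"
    "((\<lambda>x. \<Sum>i. phi k (u i) x) has_real_derivative (\<Sum>i. phi (Suc k) (u i) x)) (at x)"
proof -
  obtain B where B: "\<forall>t\<in>{0..1}. \<forall>x\<in>{c..d}. \<bar>phi (Suc k) t x\<bar> \<le> B * t\<^sup>2"
    using phi_bound[of "Suc k" c d] c by auto
  let ?M = "count_space (UNIV :: nat set)"
  define f where "f t i = phi k (u i) t" for t i
  define f' where "f' t i = phi (Suc k) (u i) t" for t i
  define g where "g i = B * (u i)\<^sup>2" for i
  have gi: "integrable ?M g"
    unfolding integrable_count_space_nat_iff g_def
    using summable_mult[OF Delta_D(4)[OF u], of "\<bar>B\<bar>"] by (simp add: abs_mult)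
  have i1: "integrable ?M (f 1)"
  proof (cases "k = 0")
    case True
    have "f 1 = (\<lambda>i. 0)" using True Delta_D(2)[OF u] by (auto simp: fun_eq_iff f_def phi_at1)
    then show ?thesis by simp
  next
    case False
    obtain B' where B': "\<forall>t\<in>{0..1}. \<forall>x\<in>{c..d}. \<bar>phi k t x\<bar> \<le> B' * t\<^sup>2"
      using phi_bound[of k c d] c False by auto
    have "summable (\<lambda>i. phi k (u i) 1)" by (rule series_bound(1)[OF u B']) (use c in auto)
    moreover have "summable (\<lambda>i. \<bar>phi k (u i) 1\<bar>)"
    proof (rule summable_comparison_test'[OF summable_mult[OF Delta_D(4)[OF u], of B']])
      fix n show "norm \<bar>phi k (u n) 1\<bar> \<le> B' * (u n)\<^sup>2" using B' Delta_D(1)[OF u, of n] Delta_D(2)[OF u, of n] c by auto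
    qed
    ultimately show ?thesis unfolding integrable_count_space_nat_iff f_def by simp
  qed
  have der: "((\<lambda>s. f s i) has_real_derivative f' t i) (at t)" for t i
    unfolding f_def f'_def by (rule phi_deriv) (rule Delta_D(2)[OF u])
  have bnd: "\<bar>f' t i\<bar> \<le> g i" if "c < t" "t < d" for t i
    using B Delta_D(1)[OF u, of i] Delta_D(2)[OF u, of i] that unfolding f'_def g_def by auto
  have intf: "integrable ?M (f t)" if "c < t" "t < d" for t
    by (rule dui_integrable[where f'=f' and g=g and c=c and d=d and pp=1])
       (use i1 c der bnd gi that in auto)
  have D: "((\<lambda>t. \<integral>i. f t i \<partial>?M) has_real_derivative (\<integral>i. f' x i \<partial>?M)) (at x)"
    by (rule dui_deriv[where g=g and c=c and d=d and pp=1]) (use i1 c der bnd gi x in auto)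
  have intf': "integrable ?M (f' x)"
  proof (rule Bochner_Integration.integrable_bound[OF gi])
    show "AE i in ?M. norm (f' x i) \<le> norm (g i)" using bnd[OF x] by (auto intro: order_trans[OF _ abs_ge_self])
  qed simp
  show "summable (\<lambda>i. phi k (u i) x)"
    using intf[OF x] unfolding integrable_count_space_nat_iff f_def
    by (rule summable_norm_cancel) 
  have e: "(\<integral>i. f t i \<partial>?M) = (\<Sum>i. phi k (u i) t)" if "t \<in> {c<..<d}" for t
    using integral_count_space_nat[OF intf[of t]] that unfolding f_def[abs_def] by simp
  have e': "(\<integral>i. f' x i \<partial>?M) = (\<Sum>i. phi (Suc k) (u i) x)"
    using integral_count_space_nat[OF intf'] unfolding f'_def[abs_def] by simp
  show "((\<lambda>x. \<Sum>i. phi k (u i) x) has_real_derivative (\<Sum>i. phi (Suc k) (u i) x)) (at x)"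
    using has_field_derivative_transform_within_open[OF D, of "{c<..<d}"] x e e' by auto
qed



lemma exp_strict: fixes v :: real assumes "v \<noteq> 0" shows "1 + v < exp v"
proof (cases "0 \<le> 1 + v / 2")
  case True
  have e: "exp v = exp (v / 2) * exp (v / 2)" by (simp add: exp_add[symmetric])
  have "1 + v / 2 \<le> exp (v / 2)" by (rule exp_ge_add_one_self)
  then have "(1 + v / 2) * (1 + v / 2) \<le> exp (v / 2) * exp (v / 2)"
    using True by (intro mult_mono) auto
  moreover have "1 + v < (1 + v / 2) * (1 + v / 2)"
    using assms by (simp add: algebra_simps) (simp add: power2_eq_square[symmetric])
  ultimately show ?thesis using e by linarith
next
  case False
  then have "1 + v < 0" by linarith
  then show ?thesis using exp_gt_zero[of v] by linarith
qed

lemma ratio_strict_mono: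
  fixes s x y :: real
  assumes s: "0 < s" "s < 1" and xy: "0 < x" "x < y"
  shows "(s powr x - 1) / x < (s powr y - 1) / y"
proof (rule DERIV_pos_imp_increasing[OF xy(2)])
  fix z assume z: "x \<le> z" "z \<le> y"
  then have z0: "0 < z" using xy by linarith
  have D: "((\<lambda>z. (s powr z - 1) / z) has_real_derivative
      ((s powr z * ln s - 0) * z - (s powr z - 1) * 1) / (z * z)) (at z)"
    by (intro DERIV_divide DERIV_diff const_powr_deriv DERIV_const DERIV_ident) (use s z0 in auto)
  define w where "w = z * ln s"
  have w: "w < 0" using s z0 by (simp add: w_def mult_pos_neg)
  have sw: "s powr z = exp w" using s by (simp add: powr_def w_def mult.commute)
  have "1 - w < exp (- w)" using exp_strict[of "-w"] w by simp
  then have "exp w * (1 - w) < exp w * exp (- w)" by simp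
  then have "exp w * (1 - w) < 1" by (simp add: exp_minus)
  then have num: "0 < (s powr z * ln s - 0) * z - (s powr z - 1) * 1"
    unfolding sw using w by (simp add: w_def algebra_simps)
  show "\<exists>y. ((\<lambda>z. (s powr z - 1) / z) has_real_derivative y) (at z) \<and> 0 < y"
    by (intro exI[of _ "((s powr z * ln s - 0) * z - (s powr z - 1) * 1) / (z * z)"] conjI D divide_pos_pos num)
       (use z0 in simp)
qed

lemma phi0_ratio_mono:
  fixes t x y :: real
  assumes t: "0 \<le> t" "t \<le> 1" and xy: "0 < x" "x < y"
  shows "phi 0 t x / x \<le> phi 0 t y / y" "0 < t \<Longrightarrow> phi 0 t x / x < phi 0 t y / y"
proof -
  have e: "phi 0 t z / z = ((1 - t) powr z - 1) / z + t" if "0 < z" for z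
    using that by (simp add: phi_def field_simps)
  have y0: "0 < y" using xy by linarith
  have strict: "phi 0 t x / x < phi 0 t y / y" if tp: "0 < t"
  proof (cases "t = 1")
    case True
    have "- 1 / x < - 1 / y" using xy by (simp add: frac_less2)
    then show ?thesis unfolding e[OF xy(1)] e[OF y0] using xy True by simp
  next
    case False
    have "((1 - t) powr x - 1) / x < ((1 - t) powr y - 1) / y"
      by (rule ratio_strict_mono) (use t tp False xy in auto)
    then show ?thesis unfolding e[OF xy(1)] e[OF y0] using xy by simp
  qed
  then show "0 < t \<Longrightarrow> phi 0 t x / x < phi 0 t y / y" .
  show "phi 0 t x / x \<le> phi 0 t y / y"
  proof (cases "t = 0")
    case True then show ?thesis by (simp add: phi_def)
  next
    case False then show ?thesis using strict t by force
  qed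
qed


lemma exp_neg_quad: fixes w :: real assumes "0 \<le> w" shows "exp (- w) \<le> 1 - w + w\<^sup>2 / 2"
proof -
  let ?h = "\<lambda>v::real. 1 - v + v\<^sup>2 / 2 - exp (- v)"
  have "?h 0 \<le> ?h w"
  proof (rule DERIV_nonneg_imp_increasing_open[OF assms])
    fix v :: real assume v: "0 < v" "v < w"
    have "(?h has_real_derivative (0 - 1 + v - exp (- v) * (- 1))) (at v)"
      by (rule derivative_eq_intros refl | simp)+
    moreover have "0 \<le> 0 - 1 + v - exp (- v) * (- 1)" using exp_ge_add_one_self[of "-v"] by simp
    ultimately show "\<exists>y. (?h has_real_derivative y) (at v) \<and> 0 \<le> y" by blast
  next
    show "continuous_on {0..w} ?h" by (intro continuous_intros) auto
  qed
  then show ?thesis by simp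
qed

lemma phi0_upper:
  fixes t x :: real
  assumes t: "0 \<le> t" "t \<le> 1" and x: "2 \<le> x"
  shows "phi 0 t x \<le> x * (x - 1) * t\<^sup>2"
proof -
  have p: "(1 - t) powr x \<le> exp (- (x * t))"
  proof (cases "t = 1")
    case True then show ?thesis by simp
  next
    case False
    then have "0 < 1 - t" using t by simp
    then have "(1 - t) powr x = exp (x * ln (1 - t))" by (simp add: powr_def)
    moreover have "x * ln (1 - t) \<le> x * (- t)"
      using ln_le_minus_one[of "1 - t"] \<open>0 < 1 - t\<close> x by (intro mult_left_mono) auto
    ultimately show ?thesis by simp
  qed
  have q: "exp (- (x * t)) \<le> 1 - x * t + (x * t)\<^sup>2 / 2"
    by (rule exp_neg_quad) (use t x in simp)
  have "phi 0 t x \<le> (x * t)\<^sup>2 / 2" using p q by (simp add: phi_def algebra_simps)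
  also have "\<dots> = (x * x / 2) * t\<^sup>2" by (simp add: power2_eq_square)
  also have "\<dots> \<le> x * (x - 1) * t\<^sup>2"
  proof (rule mult_right_mono)
    show "x * x / 2 \<le> x * (x - 1)" using x mult_left_mono[of "x/2" "x - 1" x] by (simp add: algebra_simps)
  qed simp
  finally show ?thesis .
qed

lemma proj_meas[measurable]: "(\<lambda>u::nat \<Rightarrow> real. u i) \<in> borel_measurable borel"
  by (rule borel_measurable_continuous_onI, rule continuous_on_product_then_coordinatewise, rule continuous_on_id)

lemma phi_meas_real: "(\<lambda>s. phi k s t) \<in> borel_measurable borel"
proof -
  have a: "(\<lambda>s::real. (1 - s) powr t - 1 + t * s) \<in> borel_measurable borel" by measurable
  have b: "(\<lambda>s::real. (1 - s) powr t * ln (1 - s) + s) \<in> borel_measurable borel" by measurable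
  have c: "(\<lambda>s::real. (1 - s) powr t * ln (1 - s) ^ k) \<in> borel_measurable borel" by measurable
  show ?thesis using a b c by (cases "k = 0"; cases "k = 1") (simp_all add: phi_def[abs_def])
qed

lemma series_meas_borel: "(\<lambda>u::nat \<Rightarrow> real. (\<Sum>i. phi k (u i) t) / sqsum u) \<in> borel_measurable borel"
proof -
  have m1: "(\<lambda>u::nat \<Rightarrow> real. phi k (u i) t) \<in> borel_measurable borel" for i
    using measurable_compose[OF proj_meas phi_meas_real] by simp
  have m2: "(\<lambda>u::nat \<Rightarrow> real. (u i)\<^sup>2) \<in> borel_measurable borel" for i
    using borel_measurable_power[OF proj_meas] by simp
  have "(\<lambda>u::nat \<Rightarrow> real. \<Sum>i. phi k (u i) t) \<in> borel_measurable borel"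
    by (rule borel_measurable_suminf[OF m1])
  moreover have "sqsum \<in> borel_measurable borel"
    unfolding sqsum_def[abs_def] by (rule borel_measurable_suminf[OF m2])
  ultimately show ?thesis by (rule borel_measurable_divide)
qed

definition Fk :: "nat \<Rightarrow> real \<Rightarrow> (nat \<Rightarrow> real) \<Rightarrow> real" where
  "Fk k t u = indicator (Delta - {\<lambda>_. 0}) u * ((\<Sum>i. phi k (u i) t) / sqsum u)"

definition pk :: "nat \<Rightarrow> real \<Rightarrow> real" where
  "pk k x = (if k = 0 then x * (x - 1) / 2 else if k = 1 then x - 1/2 else if k = 2 then 1 else 0)"

lemma pk_deriv: "(pk k has_real_derivative pk (Suc k) x) (at x)"
proof -
  consider "k = 0" | "k = 1" | "k \<ge> 2" by linarith
  then show ?thesis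
  proof cases
    case 1
    have "((\<lambda>x. x * (x - 1) / 2) has_real_derivative x - 1/2) (at x)"
      by (rule derivative_eq_intros refl | simp add: field_simps)+
    then show ?thesis using 1 by (simp add: pk_def[abs_def] algebra_simps)
  next
    case 2
    have "((\<lambda>x. x - 1/2) has_real_derivative 1) (at x)" by (rule derivative_eq_intros refl | simp)+
    then show ?thesis using 2 by (simp add: pk_def[abs_def])
  next
    case 3
    have "pk k = (\<lambda>x. if k = 2 then 1 else 0)" using 3 by (auto simp: pk_def fun_eq_iff)
    then show ?thesis using 3 by (simp add: pk_def)
  qed
qed

lemma sqsum_pos:
  assumes "u \<in> Delta" "u \<noteq> (\<lambda>_. 0)"
  shows "0 < sqsum u"
proof -
  obtain i where "u i \<noteq> 0" using assms(2) by auto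
  then show ?thesis unfolding sqsum_def
    by (intro suminf_pos2[OF Delta_D(4)[OF assms(1)], of i]) auto
qed

context
  fixes Xi :: "(nat \<Rightarrow> real) measure"
  assumes fin: "finite_measure Xi"
    and sXi: "sets Xi = sets (restrict_space borel Delta)"
begin

lemma space_Xi: "space Xi = Delta"
  using sets_eq_imp_space_eq[OF sXi] by (simp add: space_restrict_space)

lemma borel_Xi: "h \<in> borel_measurable borel \<Longrightarrow> h \<in> borel_measurable Xi"
  using measurable_restrict_space1[of h borel borel Delta] measurable_cong_sets[OF sXi refl, of borel] by blast

lemma S_sets: "Delta - {\<lambda>_. 0} \<in> sets Xi" "{\<lambda>_. 0} \<in> sets Xi"
proof -
  have z: "(\<lambda>_. 0::real) \<in> Delta" by (simp add: Delta_def)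
  have o: "(- {\<lambda>_. 0::real}) \<in> sets (borel :: (nat \<Rightarrow> real) measure)"
    by (intro borel_open open_Compl closed_singleton)
  have c: "{\<lambda>_. 0::real} \<in> sets (borel :: (nat \<Rightarrow> real) measure)"
    by (intro borel_closed closed_singleton)
  have "Delta - {\<lambda>_. 0} = Delta \<inter> (- {\<lambda>_. 0})" by blast
  then have "Delta - {\<lambda>_. 0} \<in> (\<inter>) Delta ` sets borel"
    using o by (intro image_eqI[of _ _ "- {\<lambda>_. 0}"]) auto
  then show "Delta - {\<lambda>_. 0} \<in> sets Xi" unfolding sXi sets_restrict_space .
  have "{\<lambda>_. 0} = Delta \<inter> {\<lambda>_. 0::real}" using z by blast
  then have "{\<lambda>_. 0} \<in> (\<inter>) Delta ` sets borel"
    using c by (intro image_eqI[of _ _ "{\<lambda>_. 0}"]) auto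
  then show "{\<lambda>_. 0} \<in> sets Xi" unfolding sXi sets_restrict_space .
qed

lemma Fk_meas: "Fk k t \<in> borel_measurable Xi"
proof -
  have "indicator (Delta - {\<lambda>_. 0}) \<in> borel_measurable Xi"
    by (rule borel_measurable_indicator[OF S_sets(1)])
  moreover have "(\<lambda>u. (\<Sum>i. phi k (u i) t) / sqsum u) \<in> borel_measurable Xi"
    by (rule borel_Xi[OF series_meas_borel])
  ultimately show ?thesis unfolding Fk_def[abs_def] by (rule borel_measurable_times)
qed

lemma Fk_int_bound:
  assumes k: "1 \<le> k" and c: "0 < c" and x: "x \<in> {c..d}"
  shows "\<exists>B. \<forall>u\<in>space Xi. \<bar>Fk k x u\<bar> \<le> B"
proof -
  obtain B where B: "\<forall>t\<in>{0..1}. \<forall>x\<in>{c..d}. \<bar>phi k t x\<bar> \<le> B * t\<^sup>2"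
    using phi_bound[OF k c] by blast
  have "\<bar>Fk k x u\<bar> \<le> \<bar>B\<bar>" if u: "u \<in> space Xi" for u
  proof (cases "u = (\<lambda>_. 0)")
    case True then show ?thesis by (simp add: Fk_def)
  next
    case False
    have uD: "u \<in> Delta" using u space_Xi by simp
    have sp: "0 < sqsum u" by (rule sqsum_pos[OF uD False])
    have "\<bar>Fk k x u\<bar> = \<bar>\<Sum>i. phi k (u i) x\<bar> / sqsum u"
      using uD False sp by (simp add: Fk_def abs_divide)
    also have "\<dots> \<le> B * sqsum u / sqsum u"
      by (rule divide_right_mono[OF series_bound(2)[OF uD B x]]) (use sp in simp)
    also have "\<dots> \<le> \<bar>B\<bar>" using sp by simp
    finally show ?thesis .
  qed
  then show ?thesis by blast
qed

lemma Fk_integrable_bounded: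
  assumes "\<forall>u\<in>space Xi. \<bar>Fk k x u\<bar> \<le> B"
  shows "integrable Xi (Fk k x)"
proof (rule Bochner_Integration.integrable_bound[OF finite_measure.integrable_const[OF fin, of B]])
  show "Fk k x \<in> borel_measurable Xi" by (rule Fk_meas)
  show "AE u in Xi. norm (Fk k x u) \<le> norm B"
    using assms by (auto intro: order_trans[OF _ abs_ge_self])
qed

lemma Fk_pt_deriv:
  assumes u: "u \<in> Delta" and c: "0 < c" "c < 1" "1 < d" and t: "c < t" "t < d"
  shows "((\<lambda>s. Fk k s u) has_real_derivative Fk (Suc k) t u) (at t)"
proof (cases "u = (\<lambda>_. 0)")
  case True
  then show ?thesis by (simp add: Fk_def)
next
  case False
  have "((\<lambda>s. (\<Sum>i. phi k (u i) s) / sqsum u) has_real_derivative (\<Sum>i. phi (Suc k) (u i) t) / sqsum u) (at t)"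
    by (rule DERIV_cdivide[OF series_deriv_cd(2)[OF u c t]])
  then show ?thesis using u False by (simp add: Fk_def)
qed

lemma Fk_deriv:
  assumes x: "0 < x"
  shows "integrable Xi (Fk k x)"
    "((\<lambda>t. integral\<^sup>L Xi (Fk k t)) has_real_derivative integral\<^sup>L Xi (Fk (Suc k) x)) (at x)"
proof -
  define c where "c = min x 1 / 2"
  define d where "d = max x 1 + 1"
  have c: "0 < c" "c < 1" "1 < d" "c < x" "x < d" using x by (auto simp: c_def d_def)
  obtain B where B: "\<forall>t\<in>{0..1}. \<forall>x\<in>{c..d}. \<bar>phi (Suc k) t x\<bar> \<le> B * t\<^sup>2"
    using phi_bound[of "Suc k" c d] c by auto
  have bnd: "\<bar>Fk (Suc k) t u\<bar> \<le> \<bar>B\<bar>" if "c < t" "t < d" "u \<in> space Xi" for t u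
  proof (cases "u = (\<lambda>_. 0)")
    case True then show ?thesis by (simp add: Fk_def)
  next
    case False
    have uD: "u \<in> Delta" using that space_Xi by simp
    have sp: "0 < sqsum u" by (rule sqsum_pos[OF uD False])
    have "\<bar>Fk (Suc k) t u\<bar> = \<bar>\<Sum>i. phi (Suc k) (u i) t\<bar> / sqsum u"
      using uD False sp by (simp add: Fk_def abs_divide)
    also have "\<dots> \<le> B * sqsum u / sqsum u"
      by (rule divide_right_mono[OF series_bound(2)[OF uD B]]) (use sp that in auto)
    also have "\<dots> \<le> \<bar>B\<bar>" using sp by simp
    finally show ?thesis .
  qed
  have i1: "integrable Xi (Fk k 1)"
  proof (cases "k = 0")
    case True
    have "Fk k 1 = (\<lambda>u. 0)"
    proof
      fix u show "Fk k 1 u = 0"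
      proof (cases "u \<in> Delta - {\<lambda>_. 0}")
        case True
        then have "phi k (u i) 1 = 0" for i using Delta_D(2)[of u i] \<open>k = 0\<close> phi_at1 by auto
        then show ?thesis by (simp add: Fk_def)
      qed (simp add: Fk_def)
    qed
    then show ?thesis by simp
  next
    case False
    then obtain B' where "\<forall>u\<in>space Xi. \<bar>Fk k 1 u\<bar> \<le> B'"
      using Fk_int_bound[of k c 1 d] c by auto
    then show ?thesis by (rule Fk_integrable_bounded)
  qed
  have der: "((\<lambda>s. Fk k s u) has_real_derivative Fk (Suc k) t u) (at t)"
    if "c < t" "t < d" "u \<in> space Xi" for t u
    using Fk_pt_deriv[of u c d t k] that c space_Xi by auto
  have gi: "integrable Xi (\<lambda>u. \<bar>B\<bar>)" by (rule finite_measure.integrable_const[OF fin])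
  show "integrable Xi (Fk k x)"
    by (rule dui_integrable[where f'="Fk (Suc k)" and c=c and d=d and pp=1, OF _ _ i1 Fk_meas der bnd gi])
       (use c in auto)
  show "((\<lambda>t. integral\<^sup>L Xi (Fk k t)) has_real_derivative integral\<^sup>L Xi (Fk (Suc k) x)) (at x)"
    by (rule dui_deriv[where c=c and d=d and pp=1, OF _ _ i1 Fk_meas Fk_meas der bnd gi])
       (use c in auto)
qed

definition Gk :: "nat \<Rightarrow> real \<Rightarrow> real" where
  "Gk k x = xi_a Xi * pk k x + integral\<^sup>L Xi (Fk k x)"

lemma Gk_eq: "Gk k x = xi_a Xi * pk k x + integral\<^sup>L Xi (Fk k x)"
  by (simp add: Gk_def)

lemma Gk_deriv: "0 < x \<Longrightarrow> (Gk k has_real_derivative Gk (Suc k) x) (at x)"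
  unfolding Gk_def[abs_def]
  by (intro DERIV_add DERIV_cmult pk_deriv Fk_deriv(2))

lemma nu_Fk: "nu_integral Xi (\<lambda>u. \<Sum>i. phi k (u i) x) = integral\<^sup>L Xi (Fk k x)"
  by (simp add: nu_integral_def set_lebesgue_integral_def Fk_def[abs_def])

lemma series_summable:
  assumes u: "u \<in> Delta" and x: "0 < x"
  shows "summable (\<lambda>i. phi k (u i) x)"
  by (rule series_deriv_cd(1)[OF u, of "min x 1 / 2" "max x 1 + 1"]) (use x in auto)

lemma gamma_eq: "x \<noteq> 0 \<Longrightarrow> xi_gamma Xi x = Gk 0 x"
proof -
  assume x: "x \<noteq> 0"
  have "(\<lambda>u. \<Sum>i. rpow (1 - u i) x - 1 + x * u i) = (\<lambda>u. \<Sum>i. phi 0 (u i) x)"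
    using x by (simp add: rpow_def phi_def mult.commute)
  then show ?thesis by (simp add: xi_gamma_def Gk_def pk_def nu_Fk)
qed

lemma deriv_iter: "0 < x \<Longrightarrow> (deriv ^^ k) (xi_gamma Xi) x = Gk k x"
proof (induction k arbitrary: x)
  case 0 then show ?case using gamma_eq by simp
next
  case (Suc k)
  have "((deriv ^^ k) (xi_gamma Xi) has_real_derivative Gk (Suc k) x) (at x)"
    by (rule has_field_derivative_transform_within_open[OF Gk_deriv[OF Suc.prems], of "{0<..}"])
       (use Suc in auto)
  then show ?case by (simp add: DERIV_imp_deriv)
qed

lemma deriv_has: "0 < x \<Longrightarrow> ((deriv ^^ k) (xi_gamma Xi) has_real_derivative (deriv ^^ Suc k) (xi_gamma Xi) x) (at x)"
proof -
  assume x: "0 < x"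
  have "((deriv ^^ k) (xi_gamma Xi) has_real_derivative Gk (Suc k) x) (at x)"
    by (rule has_field_derivative_transform_within_open[OF Gk_deriv[OF x], of "{0<..}"])
       (use x deriv_iter in auto)
  then show ?thesis using deriv_iter[OF x, of "Suc k"] by simp
qed

lemma Fk0_1: "Fk 0 1 = (\<lambda>u. 0)"
proof
  fix u show "Fk 0 1 u = 0"
  proof (cases "u \<in> Delta - {\<lambda>_. 0}")
    case True
    then have "phi 0 (u i) 1 = 0" for i using Delta_D(2)[of u i] phi_at1 by auto
    then show ?thesis by (simp add: Fk_def)
  qed (simp add: Fk_def)
qed

lemma a_nonneg: "0 \<le> xi_a Xi" by (simp add: xi_a_def)

lemma a_or_S:
  assumes "emeasure Xi Delta \<noteq> 0"
  shows "0 < xi_a Xi \<or> emeasure Xi (Delta - {\<lambda>_. 0}) \<noteq> 0"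
proof (rule ccontr)
  assume "\<not> ?thesis"
  then have a0: "xi_a Xi = 0" and s0: "emeasure Xi (Delta - {\<lambda>_. 0}) = 0" using a_nonneg by auto
  have "emeasure Xi {\<lambda>_. 0} = ennreal (measure Xi {\<lambda>_. 0})"
    by (rule finite_measure.emeasure_eq_measure[OF fin])
  then have z0: "emeasure Xi {\<lambda>_. 0} = 0" using a0 by (simp add: xi_a_def)
  have z: "(\<lambda>_. 0::real) \<in> Delta" by (simp add: Delta_def)
  have "Delta = (Delta - {\<lambda>_. 0}) \<union> {\<lambda>_. 0}" using z by blast
  then have "emeasure Xi Delta = emeasure Xi (Delta - {\<lambda>_. 0}) + emeasure Xi {\<lambda>_. 0}"
    using plus_emeasure[OF S_sets(1) S_sets(2)] by auto
  then show False using s0 z0 assms by simp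
qed

lemma pos_int:
  fixes D :: "(nat \<Rightarrow> real) \<Rightarrow> real"
  assumes D: "integrable Xi D" "\<And>u. u \<in> space Xi \<Longrightarrow> 0 \<le> D u"
    "\<And>u. u \<in> Delta - {\<lambda>_. 0} \<Longrightarrow> 0 < D u"
    and S: "emeasure Xi (Delta - {\<lambda>_. 0}) \<noteq> 0"
  shows "0 < integral\<^sup>L Xi D"
proof -
  have ge: "0 \<le> integral\<^sup>L Xi D" by (rule integral_nonneg_AE) (use D(2) in auto)
  show ?thesis
  proof (rule ccontr)
    assume "\<not> ?thesis"
    then have "integral\<^sup>L Xi D = 0" using ge by simp
    then have "AE u in Xi. D u = 0" using integral_nonneg_eq_0_iff_AE[OF D(1)] D(2) by auto
    then obtain N where N: "{u\<in>space Xi. \<not> D u = 0} \<subseteq> N" "emeasure Xi N = 0" "N \<in> sets Xi"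
      by (rule AE_E)
    moreover have "Delta - {\<lambda>_. 0} \<subseteq> {u\<in>space Xi. \<not> D u = 0}"
      using D(3) space_Xi by force
    ultimately have "emeasure Xi (Delta - {\<lambda>_. 0}) \<le> 0"
      using emeasure_mono[of "Delta - {\<lambda>_. 0}" N Xi] by auto
    then show False using S by simp
  qed
qed

lemma gamma_Fk: "0 < x \<Longrightarrow> xi_gamma Xi x = xi_a Xi * (x * (x - 1) / 2) + integral\<^sup>L Xi (Fk 0 x)"
  using gamma_eq[of x] by (simp add: Gk_def pk_def)

lemma ratio_lt:
  assumes ne: "emeasure Xi Delta \<noteq> 0" and xy: "0 < x" "x < y"
  shows "xi_gamma Xi x / x < xi_gamma Xi y / y"
proof -
  have y0: "0 < y" using xy by linarith
  define D where "D u = Fk 0 y u / y - Fk 0 x u / x" for u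
  have ix: "integrable Xi (Fk 0 x)" by (rule Fk_deriv(1)[OF xy(1)])
  have iy: "integrable Xi (Fk 0 y)" by (rule Fk_deriv(1)[OF y0])
  have iD: "integrable Xi D" unfolding D_def[abs_def] using ix iy by auto
  have intD: "integral\<^sup>L Xi D = integral\<^sup>L Xi (Fk 0 y) / y - integral\<^sup>L Xi (Fk 0 x) / x"
    unfolding D_def[abs_def] using ix iy by (simp add: integral_divide_zero)
  have eq: "xi_gamma Xi y / y - xi_gamma Xi x / x = xi_a Xi * (y - x) / 2 + integral\<^sup>L Xi D"
    unfolding gamma_Fk[OF xy(1)] gamma_Fk[OF y0] intD using xy y0
    by (simp add: field_simps)
  have Dval: "D u = (\<Sum>i. phi 0 (u i) y / y - phi 0 (u i) x / x) / sqsum u"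
    if u: "u \<in> Delta" "u \<noteq> (\<lambda>_. 0)" for u
  proof -
    have sx: "summable (\<lambda>i. phi 0 (u i) x)" by (rule series_summable[OF u(1) xy(1)])
    have sy: "summable (\<lambda>i. phi 0 (u i) y)" by (rule series_summable[OF u(1) y0])
    have "(\<Sum>i. phi 0 (u i) y / y - phi 0 (u i) x / x) = (\<Sum>i. phi 0 (u i) y) / y - (\<Sum>i. phi 0 (u i) x) / x"
      using suminf_diff[OF summable_divide[OF sy, of y] summable_divide[OF sx, of x]]
        suminf_divide[OF sy, of y] suminf_divide[OF sx, of x] by simp
    then show ?thesis using u by (simp add: D_def Fk_def diff_divide_distrib mult.commute)
  qed
  have Tsum: "summable (\<lambda>i. phi 0 (u i) y / y - phi 0 (u i) x / x)" if u: "u \<in> Delta" for u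
    using summable_diff[OF summable_divide[OF series_summable[OF u y0]] summable_divide[OF series_summable[OF u xy(1)]]] .
  have Tnn: "0 \<le> phi 0 (u i) y / y - phi 0 (u i) x / x" if u: "u \<in> Delta" for u i
    using phi0_ratio_mono(1)[OF Delta_D(1)[OF u] Delta_D(2)[OF u] xy] by simp
  have Dnn: "0 \<le> D u" if "u \<in> space Xi" for u
  proof (cases "u = (\<lambda>_. 0)")
    case True then show ?thesis by (simp add: D_def Fk_def)
  next
    case False
    have u: "u \<in> Delta" using that space_Xi by simp
    show ?thesis unfolding Dval[OF u False]
      using suminf_nonneg[OF Tsum[OF u] Tnn[OF u]] sqsum_pos[OF u False] by simp
  qed
  have Dpos: "0 < D u" if "u \<in> Delta - {\<lambda>_. 0}" for u
  proof -
    have u: "u \<in> Delta" "u \<noteq> (\<lambda>_. 0)" using that by auto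
    obtain i where i: "u i \<noteq> 0" using u(2) by auto
    have "0 < u i" using i Delta_D(1)[OF u(1), of i] by simp
    then have "0 < phi 0 (u i) y / y - phi 0 (u i) x / x"
      using phi0_ratio_mono(2)[OF Delta_D(1)[OF u(1)] Delta_D(2)[OF u(1)] xy] by simp
    then have "0 < (\<Sum>i. phi 0 (u i) y / y - phi 0 (u i) x / x)"
      by (intro suminf_pos2[OF Tsum[OF u(1)] Tnn[OF u(1)]])
    then show ?thesis unfolding Dval[OF u] using sqsum_pos[OF u] by simp
  qed
  have "0 < xi_a Xi * (y - x) / 2 + integral\<^sup>L Xi D"
  proof (cases "0 < xi_a Xi")
    case True
    have "0 \<le> integral\<^sup>L Xi D" by (rule integral_nonneg_AE) (use Dnn in auto)
    moreover have "0 < xi_a Xi * (y - x) / 2" using True xy by simp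
    ultimately show ?thesis by linarith
  next
    case False
    then have S: "emeasure Xi (Delta - {\<lambda>_. 0}) \<noteq> 0" using a_or_S[OF ne] by auto
    have "0 < integral\<^sup>L Xi D" by (rule pos_int[OF iD Dnn Dpos S])
    moreover have "0 \<le> xi_a Xi * (y - x) / 2" using a_nonneg xy by simp
    ultimately show ?thesis by linarith
  qed
  then show ?thesis using eq by linarith
qed

lemma gamma_upper:
  assumes x: "2 \<le> x"
  shows "xi_gamma Xi x \<le> x * (x - 1) * (xi_a Xi / 2 + measure Xi (Delta - {\<lambda>_. 0}))"
proof -
  have x0: "0 < x" using x by simp
  let ?S = "Delta - {\<lambda>_. 0}"
  have ix: "integrable Xi (Fk 0 x)" by (rule Fk_deriv(1)[OF x0])
  have fS: "emeasure Xi ?S < \<infinity>" using finite_measure.emeasure_finite[OF fin] by (simp add: less_top)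
  have iS: "integrable Xi (\<lambda>u. x * (x - 1) * indicator ?S u)"
    using integrable_real_indicator[OF S_sets(1) fS] by simp
  have le: "Fk 0 x u \<le> x * (x - 1) * indicator ?S u" if "u \<in> space Xi" for u
  proof (cases "u = (\<lambda>_. 0)")
    case True then show ?thesis by (simp add: Fk_def)
  next
    case False
    have u: "u \<in> Delta" using that space_Xi by simp
    have sp: "0 < sqsum u" by (rule sqsum_pos[OF u False])
    have "(\<Sum>i. phi 0 (u i) x) \<le> (\<Sum>i. x * (x - 1) * (u i)\<^sup>2)"
      by (rule suminf_le) (use phi0_upper[OF Delta_D(1)[OF u] Delta_D(2)[OF u] x] series_summable[OF u x0]
        summable_mult[OF Delta_D(4)[OF u]] in auto)
    also have "\<dots> = x * (x - 1) * sqsum u" unfolding sqsum_def by (rule suminf_mult[OF Delta_D(4)[OF u]])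
    finally have "(\<Sum>i. phi 0 (u i) x) / sqsum u \<le> x * (x - 1) * sqsum u / sqsum u"
      by (rule divide_right_mono) (use sp in simp)
    then show ?thesis using u False sp by (simp add: Fk_def)
  qed
  have "integral\<^sup>L Xi (Fk 0 x) \<le> integral\<^sup>L Xi (\<lambda>u. x * (x - 1) * indicator ?S u)"
    by (rule integral_mono[OF ix iS le])
  also have "\<dots> = x * (x - 1) * measure Xi ?S"
    using space_Xi by (simp add: Int_absorb2)
  finally have "integral\<^sup>L Xi (Fk 0 x) \<le> x * (x - 1) * measure Xi ?S" .
  then show ?thesis unfolding gamma_Fk[OF x0] by (simp add: algebra_simps)
qed

end


theorem mainTheorem1:
  fixes Xi :: "(nat \<Rightarrow> real) measure"
  assumes "finite_measure Xi"
    and "sets Xi = sets (restrict_space borel Delta)"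
    and "emeasure Xi Delta \<noteq> 0"
  shows "xi_gamma Xi 0 = 0 \<and> xi_gamma Xi 1 = 0
    \<and> (\<forall>x>1. xi_gamma Xi x > 0)
    \<and> (\<forall>x\<ge>2. xi_gamma Xi x \<le> x * (x - 1) * (xi_a Xi / 2 + measure Xi (Delta - {\<lambda>_. 0})))
    \<and> (\<forall>k. \<forall>x>0. ((deriv ^^ k) (xi_gamma Xi) has_real_derivative (deriv ^^ Suc k) (xi_gamma Xi) x) (at x))
    \<and> (\<forall>x>0. deriv (xi_gamma Xi) x = xi_a Xi * (x - 1/2)
          + nu_integral Xi (\<lambda>u. \<Sum>i. ((1 - u i) powr x * ln (1 - u i) + u i)))
    \<and> (\<forall>k\<ge>2. \<forall>x>0. (deriv ^^ k) (xi_gamma Xi) x = xi_a Xi * (if k = 2 then 1 else 0)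
          + nu_integral Xi (\<lambda>u. \<Sum>i. (1 - u i) powr x * (ln (1 - u i)) ^ k))
    \<and> strict_mono_on {1..} (\<lambda>x. xi_gamma Xi x / x)
    \<and> strict_mono_on {1..} (xi_gamma Xi)"
proof -
  note fin = assms(1) and sX = assms(2) and ne = assms(3)
  have g0: "xi_gamma Xi 0 = 0" by (simp add: xi_gamma_def rpow_def nu_integral_def)
  have g1: "xi_gamma Xi 1 = 0" using gamma_Fk[OF fin sX, of 1] Fk0_1[OF fin sX] by simp
  have rat: "xi_gamma Xi x / x < xi_gamma Xi y / y" if "0 < x" "x < y" for x y
    by (rule ratio_lt[OF fin sX ne that])
  have pos: "0 < xi_gamma Xi x" if x: "1 < x" for x
  proof -
    have "xi_gamma Xi 1 / 1 < xi_gamma Xi x / x" by (rule rat) (use x in auto)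
    then have "0 < xi_gamma Xi x / x" using g1 by simp
    then show ?thesis using x by (simp add: zero_less_divide_iff)
  qed
  have up: "\<forall>x\<ge>2. xi_gamma Xi x \<le> x * (x - 1) * (xi_a Xi / 2 + measure Xi (Delta - {\<lambda>_. 0}))"
    using gamma_upper[OF fin sX] by blast
  have dh: "\<forall>k. \<forall>x>0. ((deriv ^^ k) (xi_gamma Xi) has_real_derivative (deriv ^^ Suc k) (xi_gamma Xi) x) (at x)"
    using deriv_has[OF fin sX] by blast
  have d1: "\<forall>x>0. deriv (xi_gamma Xi) x = xi_a Xi * (x - 1/2)
          + nu_integral Xi (\<lambda>u. \<Sum>i. ((1 - u i) powr x * ln (1 - u i) + u i))"
  proof (intro allI impI)
    fix x :: real assume x: "0 < x"
    have "deriv (xi_gamma Xi) x = (deriv ^^ 1) (xi_gamma Xi) x" by simp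
    also have "\<dots> = Gk Xi 1 x" by (rule deriv_iter[OF fin sX x])
    also have "\<dots> = xi_a Xi * (x - 1/2) + nu_integral Xi (\<lambda>u. \<Sum>i. phi 1 (u i) x)"
      by (simp add: Gk_eq[OF fin sX] pk_def nu_Fk[OF fin sX])
    finally show "deriv (xi_gamma Xi) x = xi_a Xi * (x - 1/2)
          + nu_integral Xi (\<lambda>u. \<Sum>i. ((1 - u i) powr x * ln (1 - u i) + u i))"
      by (simp add: phi_def)
  qed
  have dk: "\<forall>k\<ge>2. \<forall>x>0. (deriv ^^ k) (xi_gamma Xi) x = xi_a Xi * (if k = 2 then 1 else 0)
          + nu_integral Xi (\<lambda>u. \<Sum>i. (1 - u i) powr x * (ln (1 - u i)) ^ k)"
  proof (intro allI impI)
    fix k :: nat and x :: real assume k: "2 \<le> k" and x: "0 < x"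
    have "(deriv ^^ k) (xi_gamma Xi) x = Gk Xi k x" by (rule deriv_iter[OF fin sX x])
    also have "\<dots> = xi_a Xi * (if k = 2 then 1 else 0) + nu_integral Xi (\<lambda>u. \<Sum>i. phi k (u i) x)"
      using k by (simp add: Gk_eq[OF fin sX] pk_def nu_Fk[OF fin sX])
    finally show "(deriv ^^ k) (xi_gamma Xi) x = xi_a Xi * (if k = 2 then 1 else 0)
          + nu_integral Xi (\<lambda>u. \<Sum>i. (1 - u i) powr x * (ln (1 - u i)) ^ k)"
      using k by (simp add: phi_def)
  qed
  have sm1: "strict_mono_on {1..} (\<lambda>x. xi_gamma Xi x / x)"
    by (rule strict_mono_onI) (use rat in auto)
  have nn: "0 \<le> xi_gamma Xi r / r" if "1 \<le> r" for r
  proof (cases "r = 1")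
    case True then show ?thesis using g1 by simp
  next
    case False then show ?thesis using pos[of r] that by simp
  qed
  have sm2: "strict_mono_on {1..} (xi_gamma Xi)"
  proof (rule strict_mono_onI)
    fix r s :: real assume rs: "r \<in> {1..}" "s \<in> {1..}" "r < s"
    have r0: "0 < r" "0 < s" using rs by auto
    have "xi_gamma Xi r = r * (xi_gamma Xi r / r)" using r0 by simp
    also have "\<dots> \<le> s * (xi_gamma Xi r / r)" using nn[of r] rs by (intro mult_right_mono) auto
    also have "\<dots> < s * (xi_gamma Xi s / s)" using rat[OF r0(1) rs(3)] r0 by (intro mult_strict_left_mono) auto
    also have "\<dots> = xi_gamma Xi s" using r0 by simp
    finally show "xi_gamma Xi r < xi_gamma Xi s" .
  qed
  show ?thesis using g0 g1 pos up dh d1 dk sm1 sm2 by blast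
qed

end
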